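(* For $n\ge1$ let $\mathcal{S}_{2n}=\{-n,\dots,-1,1,\dots,n\}$ and $\mathcal{S}_{2n+1}=\mathcal{S}_{2n}\cup\{0\}$. For $m\ge2$ let $T_m(z)=\sum_{\ell\ge0}t_{m,\ell}z^\ell$, where $t_{m,\ell}$ is the number of walks $0=y_0,y_1,\dots,y_\ell=-1$ with steps $y_i-y_{i-1}\in\mathcal{S}_m$ and $y_i\ge0$ for all $0\le i<\ell$ (walks absorbed at $-1$). Then the coefficients of $T_2(z)$ are the Catalan numbers ($[z^{2n+1}]T_2=\frac1{n+1}\binom{2n}{n}$, even coefficients zero), the coefficients of $T_3(z)$ are the Motzkin numbers ($[z^{n+1}]T_3$ is the $n$-th Motzkin number), and $T_4(z)=G_{0,1}(z)$, where $[z^\ell]G_{0,1}(z)$ is the number of walks $0=y_0,\dots,y_\ell=1$ with steps in $\{-2,-1,1,2\}$ and $y_i\ge1$ for all $1\le i\le\ell$.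
   Context: The $n$-th Motzkin number is the number of walks of length $n$ from $0$ to $0$ with steps in $\{-1,0,1\}$ never going below $0$. *)

theory Defs
  imports Complex_Main "HOL-Computational_Algebra.Formal_Power_Series"
begin

definition step_set :: "nat \<Rightarrow> int set" where
  "step_set m = (let n = int (m div 2) in
     {-n..-1} \<union> {1..n} \<union> (if odd m then {0} else {}))"

definition absorbed_walks :: "nat \<Rightarrow> nat \<Rightarrow> int list set" where
  "absorbed_walks m l = {ys. length ys = Suc l \<and> ys ! 0 = 0 \<and> ys ! l = -1 \<and>
      (\<forall>i\<in>{1..l}. ys ! i - ys ! (i - 1) \<in> step_set m) \<and>
      (\<forall>i<l. ys ! i \<ge> 0)}"

definition t_coeff :: "nat \<Rightarrow> nat \<Rightarrow> nat" where
  "t_coeff m l = card (absorbed_walks m l)"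

definition T :: "nat \<Rightarrow> real fps" where
  "T m = Abs_fps (\<lambda>l. real (t_coeff m l))"

definition G01_walks :: "nat \<Rightarrow> int list set" where
  "G01_walks l = {ys. length ys = Suc l \<and> ys ! 0 = 0 \<and> ys ! l = 1 \<and>
      (\<forall>i\<in>{1..l}. ys ! i - ys ! (i - 1) \<in> {-2, -1, 1, 2}) \<and>
      (\<forall>i\<in>{1..l}. ys ! i \<ge> 1)}"

definition G01 :: "real fps" where
  "G01 = Abs_fps (\<lambda>l. real (card (G01_walks l)))"

definition motzkin_walks :: "nat \<Rightarrow> int list set" where
  "motzkin_walks n = {ys. length ys = Suc n \<and> ys ! 0 = 0 \<and> ys ! n = 0 \<and>
      (\<forall>i\<in>{1..n}. ys ! i - ys ! (i - 1) \<in> {-1, 0, 1}) \<and>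
      (\<forall>i\<le>n. ys ! i \<ge> 0)}"

definition motzkin :: "nat \<Rightarrow> nat" where
  "motzkin n = card (motzkin_walks n)"

end

theory Submission
  imports Defs
begin

definition W :: "int set \<Rightarrow> nat \<Rightarrow> int \<Rightarrow> int list set" where
 "W S l k = {ys. length ys = Suc l \<and> ys ! 0 = 0 \<and> ys ! l = k \<and>
      (\<forall>i\<in>{1..l}. ys ! i - ys ! (i - 1) \<in> S) \<and> (\<forall>i\<le>l. ys ! i \<ge> 0)}"

lemma snoc_nth1: "length zs = Suc l \<Longrightarrow> i \<le> l \<Longrightarrow> (zs@[k])!i = zs!i"
  by (simp add: nth_append)
lemma snoc_nth2: "length zs = Suc l \<Longrightarrow> (zs@[k])!(Suc l) = k"
  by (simp add: nth_append)

lemma split_last: "length ys = Suc (Suc l) \<Longrightarrow> ys = take (Suc l) ys @ [ys ! Suc l]"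
  by (metis lessI take_Suc_conv_app_nth take_all order_refl)

lemma W_Suc: "ys \<in> W S (Suc l) k \<longleftrightarrow>
   (\<exists>zs k'. ys = zs @ [k] \<and> zs \<in> W S l k' \<and> k - k' \<in> S \<and> k \<ge> 0)"
proof
  assume A: "ys \<in> W S (Suc l) k"
  let ?zs = "take (Suc l) ys"
  have len: "length ys = Suc (Suc l)" using A by (simp add: W_def)
  have e: "ys = ?zs @ [k]" using split_last[OF len] A by (simp add: W_def)
  have nt: "\<And>i. i \<le> l \<Longrightarrow> ?zs ! i = ys ! i" by simp
  have "?zs \<in> W S l (ys ! l)"
    unfolding W_def using A len
    by (auto simp: W_def)
  moreover have "k - ys ! l \<in> S" proof -
    have "\<forall>i\<in>{1..Suc l}. ys ! i - ys ! (i - 1) \<in> S" "ys ! Suc l = k" using A by (simp_all add: W_def)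
    from bspec[OF this(1), of "Suc l"] this(2) show ?thesis by simp
  qed
  moreover have "k \<ge> 0" using A by (auto simp: W_def)
  ultimately show "\<exists>zs k'. ys = zs @ [k] \<and> zs \<in> W S l k' \<and> k - k' \<in> S \<and> k \<ge> 0"
    using e by blast
next
  assume "\<exists>zs k'. ys = zs @ [k] \<and> zs \<in> W S l k' \<and> k - k' \<in> S \<and> k \<ge> 0"
  then obtain zs k' where e: "ys = zs @ [k]" and z: "zs \<in> W S l k'" and s: "k - k' \<in> S" and k: "k \<ge> 0"
    by blast
  have len: "length zs = Suc l" using z by (simp add: W_def)
  note n1 = snoc_nth1[OF len] and n2 = snoc_nth2[OF len]
  have "ys ! 0 = 0" using z n1[of 0] e by (simp add: W_def)
  moreover have "\<forall>i\<in>{1..Suc l}. ys ! i - ys ! (i - 1) \<in> S"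
  proof
    fix i assume i: "i \<in> {1..Suc l}"
    show "ys ! i - ys ! (i - 1) \<in> S"
    proof (cases "i = Suc l")
      case True thus ?thesis using e n1[of l] n2 z s by (simp add: W_def)
    next
      case False
      then have "i \<le> l" "i - 1 \<le> l" using i by auto
      thus ?thesis using i e n1[of i] n1[of "i-1"] z by (simp add: W_def)
    qed
  qed
  moreover have "\<forall>i\<le>Suc l. ys ! i \<ge> 0"
  proof (intro allI impI)
    fix i assume i: "i \<le> Suc l"
    show "ys ! i \<ge> 0"
    proof (cases "i = Suc l")
      case True thus ?thesis using e n2 k by simp
    next
      case False thus ?thesis using i e n1[of i] z by (simp add: W_def)
    qed
  qed
  ultimately show "ys \<in> W S (Suc l) k" using e len n2 by (simp add: W_def)
qed

lemma abs_Suc: "ys \<in> absorbed_walks m (Suc l) \<longleftrightarrow>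
   (\<exists>zs k'. ys = zs @ [-1] \<and> zs \<in> W (step_set m) l k' \<and> -1 - k' \<in> step_set m)"
proof
  assume A: "ys \<in> absorbed_walks m (Suc l)"
  let ?zs = "take (Suc l) ys"
  have len: "length ys = Suc (Suc l)" using A by (simp add: absorbed_walks_def)
  have e: "ys = ?zs @ [-1]" using split_last[OF len] A by (simp add: absorbed_walks_def)
  have "?zs \<in> W (step_set m) l (ys ! l)"
    using A len by (auto simp: W_def absorbed_walks_def)
  moreover have "-1 - ys ! l \<in> step_set m" proof -
    have "\<forall>i\<in>{1..Suc l}. ys ! i - ys ! (i - 1) \<in> step_set m" "ys ! Suc l = -1" using A by (simp_all add: absorbed_walks_def)
    from bspec[OF this(1), of "Suc l"] this(2) show ?thesis by simp
  qed
  ultimately show "\<exists>zs k'. ys = zs @ [-1] \<and> zs \<in> W (step_set m) l k' \<and> -1 - k' \<in> step_set m"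
    using e by blast
next
  assume "\<exists>zs k'. ys = zs @ [-1] \<and> zs \<in> W (step_set m) l k' \<and> -1 - k' \<in> step_set m"
  then obtain zs k' where e: "ys = zs @ [-1]" and z: "zs \<in> W (step_set m) l k'" and s: "-1 - k' \<in> step_set m"
    by blast
  have len: "length zs = Suc l" using z by (simp add: W_def)
  note n1 = snoc_nth1[OF len] and n2 = snoc_nth2[OF len]
  have "ys ! 0 = 0" using z n1[of 0] e by (simp add: W_def)
  moreover have "\<forall>i\<in>{1..Suc l}. ys ! i - ys ! (i - 1) \<in> step_set m"
  proof
    fix i assume i: "i \<in> {1..Suc l}"
    show "ys ! i - ys ! (i - 1) \<in> step_set m"
    proof (cases "i = Suc l")
      case True thus ?thesis using e n1[of l] n2 z s by (simp add: W_def)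
    next
      case False
      then have "i \<le> l" "i - 1 \<le> l" using i by auto
      thus ?thesis using i e n1[of i] n1[of "i-1"] z by (simp add: W_def)
    qed
  qed
  moreover have "\<forall>i<Suc l. ys ! i \<ge> 0"
    using e n1 z by (simp add: W_def)
  ultimately show "ys \<in> absorbed_walks m (Suc l)" using e len n2 by (simp add: absorbed_walks_def)
qed

lemma abs_0: "absorbed_walks m 0 = {}"
  by (auto simp: absorbed_walks_def)

lemma ss2: "step_set 2 = {-1,1}" by (auto simp: step_set_def)
lemma ss3: "step_set 3 = {-1,0,1}" by (auto simp: step_set_def)
lemma ss4: "step_set 4 = {-2,-1,1,2}" by (auto simp: step_set_def)

lemma abs23:
  assumes "step_set m = {-1,1} \<or> step_set m = {-1,0,1}"
  shows "absorbed_walks m (Suc l) = (\<lambda>zs. zs@[-1]) ` W (step_set m) l 0"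
proof (rule set_eqI)
  fix ys
  show "ys \<in> absorbed_walks m (Suc l) \<longleftrightarrow> ys \<in> (\<lambda>zs. zs@[-1]) ` W (step_set m) l 0"
  proof
    assume "ys \<in> absorbed_walks m (Suc l)"
    then obtain zs k' where e: "ys = zs @ [-1]" and z: "zs \<in> W (step_set m) l k'"
      and s: "-1 - k' \<in> step_set m" using abs_Suc by blast
    have "k' \<ge> 0" using z by (auto simp: W_def)
    hence "k' = 0" using s assms by auto
    thus "ys \<in> (\<lambda>zs. zs@[-1]) ` W (step_set m) l 0" using e z by blast
  next
    assume "ys \<in> (\<lambda>zs. zs@[-1]) ` W (step_set m) l 0"
    then obtain zs where "ys = zs @ [-1]" "zs \<in> W (step_set m) l 0" by blast
    moreover have "-1 - 0 \<in> step_set m" using assms by auto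
    ultimately show "ys \<in> absorbed_walks m (Suc l)" using abs_Suc by blast
  qed
qed

lemma card_snoc: "card ((\<lambda>zs. zs@[k]) ` A) = card A"
  by (rule card_image) (auto simp: inj_on_def)

lemma W_0: "W S 0 k = (if k = 0 then {[0]} else {})"
  by (auto simp: W_def length_Suc_conv)

lemma W_Suc_pm: "W {-1,1} (Suc l) k = (if k < 0 then {} else
    (\<lambda>zs. zs@[k]) ` (W {-1,1} l (k-1) \<union> W {-1,1} l (k+1)))"
proof -
  have "ys \<in> W {-1,1} (Suc l) k \<longleftrightarrow> ys \<in> (if k < 0 then {} else
    (\<lambda>zs. zs@[k]) ` (W {-1,1} l (k-1) \<union> W {-1,1} l (k+1)))" for ys
    unfolding W_Suc by (auto simp: algebra_simps) force+
  thus ?thesis by blast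
qed

fun cw :: "nat \<Rightarrow> int \<Rightarrow> nat" where
  "cw 0 k = (if k = 0 then 1 else 0)"
| "cw (Suc l) k = (if k < 0 then 0 else cw l (k-1) + cw l (k+1))"

lemma W_card: "finite (W {-1,1} l k) \<and> card (W {-1,1} l k) = cw l k"
proof (induction l arbitrary: k)
  case 0 thus ?case by (simp add: W_0)
next
  case (Suc l)
  have d: "W {-1,1} l (k-1) \<inter> W {-1,1} l (k+1) = {}" by (auto simp: W_def)
  show ?case
  proof (cases "k < 0")
    case True thus ?thesis by (simp add: W_Suc_pm)
  next
    case False
    thus ?thesis using Suc.IH[of "k-1"] Suc.IH[of "k+1"] d
      by (simp add: W_Suc_pm card_snoc card_Un_disjoint)
  qed
qed

lemma cw_nz: "cw l k \<noteq> 0 \<Longrightarrow> 0 \<le> k \<and> k \<le> int l \<and> even (int l - k)"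
proof (induction l arbitrary: k)
  case 0 thus ?case by (simp split: if_splits)
next
  case (Suc l)
  from Suc.prems have k: "k \<ge> 0" and d: "cw l (k-1) \<noteq> 0 \<or> cw l (k+1) \<noteq> 0"
    by (auto split: if_splits)
  from d show ?case
  proof
    assume "cw l (k-1) \<noteq> 0"
    from Suc.IH[OF this] k show ?case by (auto; presburger)
  next
    assume "cw l (k+1) \<noteq> 0"
    from Suc.IH[OF this] k show ?case by (auto; presburger)
  qed
qed

definition cf :: "nat \<Rightarrow> nat \<Rightarrow> int" where
  "cf l j = int (l choose j) - (if j = 0 then 0 else int (l choose (j-1)))"

lemma cf_pascal: "j \<ge> 1 \<Longrightarrow> cf (Suc l) j = cf l j + cf l (j-1)"
proof -
  assume "j \<ge> 1"
  then obtain i where j: "j = Suc i" by (cases j) auto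
  show ?thesis
  proof (cases i)
    case 0 thus ?thesis using j by (simp add: cf_def)
  next
    case (Suc h) thus ?thesis using j by (simp add: cf_def)
  qed
qed

lemma cf_sym: "cf (2*i+1) (Suc i) = 0"
proof -
  have "(2*i+1) choose (Suc i) = (2*i+1) choose ((2*i+1) - Suc i)"
    by (rule binomial_symmetric) simp
  thus ?thesis by (simp add: cf_def)
qed

lemma cw_closed: "2*j \<le> l \<Longrightarrow> int (cw l (int l - 2*int j)) = cf l j"
proof (induction l arbitrary: j)
  case 0 thus ?case by (simp add: cf_def)
next
  case (Suc l)
  define k where "k = int (Suc l) - 2*int j"
  have k0: "k \<ge> 0" using Suc.prems k_def by simp
  have A: "int (cw l (k-1)) = (if 2*j \<le> l then cf l j else 0)"
  proof (cases "2*j \<le> l")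
    case True
    have "k - 1 = int l - 2*int j" using k_def by simp
    thus ?thesis using Suc.IH[OF True] True by simp
  next
    case False
    hence "k - 1 = -1" using k_def Suc.prems by simp
    thus ?thesis using cw_nz[of l "k-1"] False by auto
  qed
  have B: "int (cw l (k+1)) = (if j \<ge> 1 then cf l (j-1) else 0)"
  proof (cases "j \<ge> 1")
    case True
    have e: "k + 1 = int l - 2*int (j-1)" using k_def True by (simp add: of_nat_diff)
    have "2*(j-1) \<le> l" using Suc.prems True by simp
    from Suc.IH[OF this] True show ?thesis unfolding e by simp
  next
    case False
    hence "k + 1 > int l" using k_def by simp
    thus ?thesis using cw_nz[of l "k+1"] False by auto
  qed
  have "int (cw (Suc l) k) = int (cw l (k-1)) + int (cw l (k+1))" using k0 by simp
  also have "\<dots> = cf (Suc l) j"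
  proof (cases "j \<ge> 1")
    case False hence "j = 0" by simp
    thus ?thesis using A B by (simp add: cf_def)
  next
    case True
    show ?thesis
    proof (cases "2*j \<le> l")
      case True2: True
      thus ?thesis using A B True cf_pascal by simp
    next
      case False
      then have l: "l = 2*(j-1)+1" using Suc.prems True by simp
      have "cf l j = 0" using cf_sym[of "j-1"] l True by simp
      thus ?thesis using A B True False cf_pascal[OF True, of l] by simp
    qed
  qed
  finally show ?case using k_def by simp
qed

lemma cat_id: "n \<noteq> 0 \<Longrightarrow> n * ((2*n) choose n) = (n+1) * ((2*n) choose (n-1))"
proof (cases n)
  case 0 assume "n \<noteq> 0" thus ?thesis using 0 by simp
next
  case (Suc i)
  have h: "Suc i * (Suc (i + Suc i) choose Suc i) = Suc (Suc i) * (Suc (i + Suc i) choose i)"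
    by (rule Suc_times_binomial_add)
  have e1: "Suc (i + Suc i) = 2*n" using Suc by simp
  have h2: "n * (2*n choose n) = Suc n * (2*n choose i)"
  proof -
    have "Suc i * (2*n choose Suc i) = Suc (Suc i) * (2*n choose i)" using h unfolding e1 .
    thus ?thesis unfolding Suc[symmetric] .
  qed
  have e2: "n - 1 = i" using Suc by simp
  show ?thesis using h2 unfolding e2 by simp
qed

lemma cat_real: "real_of_int (cf (2*n) n) = real ((2 * n) choose n) / real (n + 1)"
proof (cases "n = 0")
  case True show ?thesis unfolding True by (simp add: cf_def)
next
  case False
  have "real (n+1) * real_of_int (cf (2*n) n) = real ((2 * n) choose n)"
  proof -
    have "real (n+1) * real_of_int (cf (2*n) n) = real (n+1) * real ((2*n) choose n) - real ((n+1) * ((2*n) choose (n-1)))"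
      using False by (simp add: cf_def algebra_simps)
    also have "\<dots> = real ((2 * n) choose n)" unfolding cat_id[OF False, symmetric] by (simp add: algebra_simps)
    finally show ?thesis .
  qed
  thus ?thesis by (simp add: field_simps)
qed


lemma rev_map_nth: "length xs = Suc l \<Longrightarrow> i \<le> l \<Longrightarrow> rev (map h xs) ! i = h (xs ! (l - i))"
  by (simp add: rev_nth)

lemma T4_bij: "bij_betw (\<lambda>ys. rev (map (\<lambda>y. y+1) ys)) (absorbed_walks 4 l) (G01_walks l)"
proof (rule bij_betw_byWitness[where f' = "\<lambda>ws. rev (map (\<lambda>w. w-1) ws)"])
  show "\<forall>a\<in>absorbed_walks 4 l. rev (map (\<lambda>w. w-1) (rev (map (\<lambda>y. y+1) a))) = a"
    by (simp add: rev_map comp_def)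
  show "\<forall>a\<in>G01_walks l. rev (map (\<lambda>y. y+1) (rev (map (\<lambda>w. w-1) a))) = a"
    by (simp add: rev_map comp_def)
  show "(\<lambda>ys. rev (map (\<lambda>y. y+1) ys)) ` absorbed_walks 4 l \<subseteq> G01_walks l"
  proof
    fix ws assume "ws \<in> (\<lambda>ys. rev (map (\<lambda>y. y+1) ys)) ` absorbed_walks 4 l"
    then obtain ys where e: "ws = rev (map (\<lambda>y. y+1) ys)" and A: "ys \<in> absorbed_walks 4 l" by blast
    have len: "length ys = Suc l" using A by (simp add: absorbed_walks_def)
    note nt = rev_map_nth[OF len, of _ "\<lambda>y. y+1"]
    have st: "\<forall>i\<in>{1..l}. ys ! i - ys ! (i - 1) \<in> {-2,-1,1,2}"
      using A by (simp add: absorbed_walks_def ss4)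
    have nn: "\<forall>i<l. ys ! i \<ge> 0" using A by (simp add: absorbed_walks_def)
    have "\<forall>i\<in>{1..l}. ws ! i - ws ! (i - 1) \<in> {-2, -1, 1, 2}"
    proof
      fix i assume i: "i \<in> {1..l}"
      have j: "Suc (l - i) \<in> {1..l}" "Suc (l - i) - 1 = l - i" "l - (i - 1) = Suc (l - i)" using i by auto
      have "ws ! i - ws ! (i - 1) = - (ys ! Suc (l - i) - ys ! (Suc (l - i) - 1))"
        using i e nt[of i] nt[of "i-1"] j by simp
      thus "ws ! i - ws ! (i - 1) \<in> {-2, -1, 1, 2}" using bspec[OF st j(1)] by auto
    qed
    moreover have "\<forall>i\<in>{1..l}. ws ! i \<ge> 1"
    proof
      fix i assume i: "i \<in> {1..l}"
      have "l - i < l" using i by auto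
      thus "ws ! i \<ge> 1" using e nt[of i] nn i by auto
    qed
    moreover have "ws ! 0 = 0" "ws ! l = 1" using e nt[of 0] nt[of l] A by (auto simp: absorbed_walks_def)
    ultimately show "ws \<in> G01_walks l" using e len by (simp add: G01_walks_def)
  qed
  show "(\<lambda>ws. rev (map (\<lambda>w. w-1) ws)) ` G01_walks l \<subseteq> absorbed_walks 4 l"
  proof
    fix ys assume "ys \<in> (\<lambda>ws. rev (map (\<lambda>w. w-1) ws)) ` G01_walks l"
    then obtain ws where e: "ys = rev (map (\<lambda>w. w-1) ws)" and A: "ws \<in> G01_walks l" by blast
    have len: "length ws = Suc l" using A by (simp add: G01_walks_def)
    note nt = rev_map_nth[OF len, of _ "\<lambda>w. w-1"]
    have st: "\<forall>i\<in>{1..l}. ws ! i - ws ! (i - 1) \<in> {-2,-1,1,2}"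
      using A by (simp add: G01_walks_def)
    have nn: "\<forall>i\<in>{1..l}. ws ! i \<ge> 1" using A by (simp add: G01_walks_def)
    have "\<forall>i\<in>{1..l}. ys ! i - ys ! (i - 1) \<in> step_set 4"
    proof
      fix i assume i: "i \<in> {1..l}"
      have j: "Suc (l - i) \<in> {1..l}" "Suc (l - i) - 1 = l - i" "l - (i - 1) = Suc (l - i)" using i by auto
      have "ys ! i - ys ! (i - 1) = - (ws ! Suc (l - i) - ws ! (Suc (l - i) - 1))"
        using i e nt[of i] nt[of "i-1"] j by simp
      thus "ys ! i - ys ! (i - 1) \<in> step_set 4" using bspec[OF st j(1)] by (auto simp: ss4)
    qed
    moreover have "\<forall>i<l. ys ! i \<ge> 0"
    proof (intro allI impI)
      fix i assume i: "i < l"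
      have "l - i \<in> {1..l}" using i by auto
      thus "ys ! i \<ge> 0" using e nt[of i] nn i by fastforce
    qed
    moreover have "ys ! 0 = 0" "ys ! l = -1" using e nt[of 0] nt[of l] A by (auto simp: G01_walks_def)
    ultimately show "ys \<in> absorbed_walks 4 l" using e len by (simp add: absorbed_walks_def)
  qed
qed

lemma t2_card: "t_coeff 2 (Suc l) = cw l 0"
proof -
  have "t_coeff 2 (Suc l) = card (W (step_set 2) l 0)"
    unfolding t_coeff_def by (subst abs23) (auto simp: ss2 card_snoc)
  thus ?thesis using W_card[of l 0] by (simp add: ss2)
qed

theorem proposition5p1:
  shows "(\<forall>n. fps_nth (T 2) (2 * n + 1) = real ((2 * n) choose n) / real (n + 1))
       \<and> (\<forall>n. fps_nth (T 2) (2 * n) = 0)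
       \<and> (\<forall>n. fps_nth (T 3) (n + 1) = real (motzkin n))
       \<and> T 4 = G01"
proof (intro conjI allI)
  fix n
  have "int (cw (2*n) (int (2*n) - 2*int n)) = cf (2*n) n" by (rule cw_closed) simp
  hence "int (cw (2*n) 0) = cf (2*n) n" by simp
  hence "real (cw (2*n) 0) = real_of_int (cf (2*n) n)" by (metis of_int_of_nat_eq)
  thus "fps_nth (T 2) (2 * n + 1) = real ((2 * n) choose n) / real (n + 1)"
    using t2_card[of "2*n"] cat_real[of n] by (simp add: T_def)
next
  fix n
  show "fps_nth (T 2) (2 * n) = 0"
  proof (cases n)
    case 0 thus ?thesis by (simp add: T_def t_coeff_def abs_0)
  next
    case (Suc i)
    have "2*n = Suc (2*i+1)" using Suc by simp
    moreover have "cw (2*i+1) 0 = 0"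
    proof -
      have "\<not> even (int (2*i+1) - 0)" by simp
      thus ?thesis using cw_nz[of "2*i+1" 0] by blast
    qed
    ultimately show ?thesis using t2_card[of "2*i+1"] by (simp add: T_def)
  qed
next
  fix n
  have "motzkin_walks n = W {-1,0,1} n 0" by (simp add: motzkin_walks_def W_def)
  moreover have "t_coeff 3 (Suc n) = card (W (step_set 3) n 0)"
    unfolding t_coeff_def by (subst abs23) (auto simp: ss3 card_snoc)
  ultimately show "fps_nth (T 3) (n + 1) = real (motzkin n)"
    by (simp add: T_def motzkin_def ss3)
next
  show "T 4 = G01"
    unfolding T_def G01_def t_coeff_def using bij_betw_same_card[OF T4_bij] by simp
qed

end
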